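(* Let $\mathsf G=(A_\star,B,C,D)$ with $A_\star=SJ_\star S^{-1}$ its Jordan decomposition and $\rho(A_\star)\le1$. Then for all $n\ge1$, \[ \|\mathcal M_n(\mathsf G)\|_{\mathrm{op}}\le\|\mathcal M_{n+1}(\mathsf G)\|_{\mathrm{op}}\le\|D\|_{\mathrm{op}}+\|S^{-1}B\|_{\mathrm{op}}\|CS\|_{\mathrm{op}}K_2(n). \]
   Context: $\mathcal M_k(\mathsf G):=[D|CB|CA_\star B|\dots|CA_\star^{k-2}B]$. $\mathsf{blkspec}(A_\star)$ is the set of pairs $(\lambda,k)$ with $\lambda$ an eigenvalue of $A_\star$ and $k$ the size of an associated Jordan block. Define $\widetilde M(k,N):=N^{1/2}$ if $k=1$; $N^{k-1/2}\big(\frac e{k-1}\big)^{k-1}$ if $2\le k\le N+1$; $N^{1/2}2^N$ if $k\ge N+1$. Define $M(k,\lambda,N):=\min\{\frac{k}{(1-|\lambda|)^{k-1/2}},\widetilde M(k,N)\}$ if $0\le|\lambda|<1$ and $\widetilde M(k,N)$ if $|\lambda|=1$. $K_2(N):=\max_{(\lambda,k)\in\mathsf{blkspec}(A_\star)}M(k,\lambda,N)$. *)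

theory Defs
  imports "Jordan_Normal_Form.Spectral_Radius"
begin

definition vec_norm2 :: "complex vec \<Rightarrow> real" where
  "vec_norm2 x = sqrt (\<Sum>i<dim_vec x. (cmod (x $ i))\<^sup>2)"

definition op_norm :: "complex mat \<Rightarrow> real" where
  "op_norm M = Sup {vec_norm2 (M *\<^sub>v x) | x. x \<in> carrier_vec (dim_col M) \<and> vec_norm2 x \<le> 1}"

text \<open>The block matrix M_k(G) = [D | CB | CAB | ... | CA^(k-2)B];
  D is p x m, B is d x m, so the result is p x (k*m). Block b (0-based) of columns
  is D for b = 0 and C A^(b-1) B for b >= 1.\<close>

definition markov_mat :: "nat \<Rightarrow> complex mat \<Rightarrow> complex mat \<Rightarrow> complex mat \<Rightarrow> complex mat \<Rightarrow> complex mat" where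
  "markov_mat k A B C D =
     mat (dim_row D) (k * dim_col D)
       (\<lambda>(i, j). if j div dim_col D = 0 then D $$ (i, j mod dim_col D)
                 else (C * (A ^\<^sub>m (j div dim_col D - 1)) * B) $$ (i, j mod dim_col D))"

text \<open>Block spectrum of a Jordan matrix given by its list of (block size, eigenvalue)
  pairs: pairs (lambda, k); blocks of size 0 are not genuine blocks.\<close>

definition blkspec :: "(nat \<times> complex) list \<Rightarrow> (complex \<times> nat) set" where
  "blkspec n_as = {(lam, k) | lam k. (k, lam) \<in> set n_as \<and> k > 0}"

definition Mtilde :: "nat \<Rightarrow> nat \<Rightarrow> real" where
  "Mtilde k N =
     (if k = 1 then sqrt (real N)
      else if 2 \<le> k \<and> k \<le> N + 1 then
        real N powr (real k - 1/2) * (exp 1 / (real k - 1)) ^ (k - 1)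
      else sqrt (real N) * 2 ^ N)"

definition Mfun :: "nat \<Rightarrow> complex \<Rightarrow> nat \<Rightarrow> real" where
  "Mfun k lam N =
     (if cmod lam < 1 then min (real k / (1 - cmod lam) powr (real k - 1/2)) (Mtilde k N)
      else Mtilde k N)"

definition K2 :: "(nat \<times> complex) list \<Rightarrow> nat \<Rightarrow> real" where
  "K2 n_as N = Max ((\<lambda>(lam, k). Mfun k lam N) ` blkspec n_as)"

end

theory Submission
  imports Defs "HOL-Analysis.L2_Norm"
begin

lemma geom_le: fixes r :: real assumes "0 \<le> r" "r < 1"
  shows "(\<Sum>u<U. r^u) \<le> 1/(1-r)"
proof -
  have "(\<Sum>u<U. r^u) * (1-r) = 1 - r^U"
    using assms by (simp add: sum_gp_strict)
  moreover have "0 \<le> r^U" using assms by simp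
  ultimately have "(\<Sum>u<U. r^u) * (1-r) \<le> 1" by simp
  then show ?thesis using assms by (simp add: le_divide_eq)
qed

lemma geom_ivl_le: fixes r :: real assumes "0 \<le> r" "r < 1"
  shows "(\<Sum>u\<in>{a..<b}. r^(u-a)) \<le> 1/(1-r)"
proof (cases "a \<le> b")
  case True
  have "(\<Sum>u\<in>{a..<b}. r^(u-a)) = (\<Sum>u<b-a. r^u)"
  proof -
    have "(\<Sum>u\<in>{a..<b}. r^(u-a)) = (\<Sum>u\<in>{0+a..<(b-a)+a}. r^(u-a))" using True by simp
    also have "\<dots> = (\<Sum>u\<in>{0..<b-a}. r^u)" by (subst sum.shift_bounds_nat_ivl) simp
    finally show ?thesis by (simp add: atLeast0LessThan)
  qed
  then show ?thesis using geom_le[OF assms] by simp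
next
  case False then show ?thesis using assms by simp
qed

lemma choose_Suc_sum: "real (u choose Suc m) = (\<Sum>v<u. real (v choose m))"
  by (induction u) auto

lemma swap_tri: "(\<Sum>u<U. \<Sum>v<u. f u v) = (\<Sum>v<U. \<Sum>u\<in>{Suc v..<U}. (f u v :: real))"
proof (induction U)
  case 0 then show ?case by simp
next
  case (Suc U)
  have "(\<Sum>v<Suc U. \<Sum>u\<in>{Suc v..<Suc U}. f u v) = (\<Sum>v<U. \<Sum>u\<in>{Suc v..<Suc U}. f u v)"
    by simp
  also have "\<dots> = (\<Sum>v<U. (\<Sum>u\<in>{Suc v..<U}. f u v) + f U v)"
    by (rule sum.cong) auto
  finally show ?case using Suc by (simp add: sum.distrib)
qed

lemma G_bound: fixes r :: real assumes r: "0 \<le> r" "r < 1"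
  shows "(\<Sum>u<U. real (u choose m) * r^(u-m)) \<le> 1/(1-r)^(m+1)"
proof (induction m arbitrary: U)
  case 0 then show ?case using geom_le[OF r] by simp
next
  case (Suc m)
  have "(\<Sum>u<U. real (u choose Suc m) * r^(u - Suc m)) = (\<Sum>u<U. \<Sum>v<u. real (v choose m) * r^(u - Suc m))"
    by (simp add: choose_Suc_sum sum_distrib_right)
  also have "\<dots> = (\<Sum>v<U. \<Sum>u\<in>{Suc v..<U}. real (v choose m) * r^(u - Suc m))"
    by (rule swap_tri)
  also have "\<dots> \<le> (\<Sum>v<U. real (v choose m) * r^(v-m) * (1/(1-r)))"
  proof (rule sum_mono)
    fix v assume "v \<in> {..<U}"
    show "(\<Sum>u\<in>{Suc v..<U}. real (v choose m) * r^(u - Suc m)) \<le> real (v choose m) * r^(v-m) * (1/(1-r))"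
    proof (cases "v < m")
      case True then show ?thesis by (simp add: binomial_eq_0)
    next
      case False
      have "(\<Sum>u\<in>{Suc v..<U}. real (v choose m) * r^(u - Suc m)) = real (v choose m) * r^(v-m) * (\<Sum>u\<in>{Suc v..<U}. r^(u - Suc v))"
        unfolding sum_distrib_left
      proof (rule sum.cong)
        fix u assume "u \<in> {Suc v..<U}"
        then have "u - Suc m = (v - m) + (u - Suc v)" using False by auto
        then show "real (v choose m) * r ^ (u - Suc m) = real (v choose m) * r ^ (v - m) * r ^ (u - Suc v)"
          by (simp add: power_add)
      qed simp
      also have "\<dots> \<le> real (v choose m) * r^(v-m) * (1/(1-r))"
        by (rule mult_left_mono[OF geom_ivl_le[OF r]]) (use r in simp)
      finally show ?thesis .
    qed
  qed
  also have "\<dots> = (\<Sum>v<U. real (v choose m) * r^(v-m)) * (1/(1-r))"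
    by (simp add: sum_divide_distrib)
  also have "\<dots> \<le> 1/(1-r)^(m+1) * (1/(1-r))"
    by (rule mult_right_mono[OF Suc]) (use r in simp)
  also have "\<dots> = 1/(1-r)^(Suc m+1)" by simp
  finally show ?case .
qed

lemma sq_sum_le: fixes a :: "nat \<Rightarrow> real"
  shows "(\<Sum>j<k. a j)^2 \<le> real k * (\<Sum>j<k. (a j)^2)"
proof -
  have "(\<Sum>j<k. a j) \<le> (\<Sum>j<k. \<bar>a j\<bar> * \<bar>1\<bar>)" by (simp add: sum_mono)
  also have "\<dots> \<le> L2_set a {..<k} * L2_set (\<lambda>_. 1) {..<k}" by (rule L2_set_mult_ineq)
  finally have 1: "(\<Sum>j<k. a j) \<le> L2_set a {..<k} * sqrt (real k)" by (simp add: L2_set_constant)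
  have "-(\<Sum>j<k. a j) \<le> (\<Sum>j<k. \<bar>a j\<bar> * \<bar>1\<bar>)" by (simp add: sum_mono flip: sum_negf)
  also have "\<dots> \<le> L2_set a {..<k} * L2_set (\<lambda>_. 1) {..<k}" by (rule L2_set_mult_ineq)
  finally have 2: "-(\<Sum>j<k. a j) \<le> L2_set a {..<k} * sqrt (real k)" by (simp add: L2_set_constant)
  have "\<bar>\<Sum>j<k. a j\<bar> \<le> L2_set a {..<k} * sqrt (real k)" using 1 2 by linarith
  then have "\<bar>\<Sum>j<k. a j\<bar>^2 \<le> (L2_set a {..<k} * sqrt (real k))^2"
    by (rule power_mono) simp
  also have "\<dots> = (\<Sum>j<k. (a j)^2) * real k"
    by (simp add: power_mult_distrib L2_set_def sum_nonneg)
  finally show ?thesis by (simp add: mult.commute)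
qed

lemma choose_sq_le: "real (t choose j)^2 \<le> real ((2*t) choose (2*j))"
proof -
  have "(t choose j) * (t choose (2*j - j)) \<le> (\<Sum>k\<le>2*j. (t choose k) * (t choose (2*j - k)))"
    by (rule member_le_sum) auto
  also have "\<dots> = (2*t) choose (2*j)" using vandermonde[of t t "2*j"] by (simp add: mult_2)
  finally have "(t choose j)^2 \<le> (2*t) choose (2*j)" by (simp add: power2_eq_square)
  then show ?thesis by (metis of_nat_le_iff of_nat_power)
qed

definition cc :: "nat \<Rightarrow> real \<Rightarrow> nat \<Rightarrow> real" where
  "cc k r t = (\<Sum>j<k. real (t choose j) * r^(t-j))"

lemma cc_nonneg: "0 \<le> r \<Longrightarrow> 0 \<le> cc k r t"
  unfolding cc_def by (intro sum_nonneg) auto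

lemma part_b: fixes r :: real assumes r: "0 \<le> r" "r < 1" and k: "k \<ge> 1"
  shows "(\<Sum>t<N. (cc k r t)^2) \<le> real k^2 / (1-r)^(2*k-1)"
proof -
  have "(\<Sum>t<N. (cc k r t)^2) \<le> (\<Sum>t<N. real k * (\<Sum>j<k. real ((2*t) choose (2*j)) * r^(2*t-2*j)))"
  proof (rule sum_mono)
    fix t
    have "(cc k r t)^2 \<le> real k * (\<Sum>j<k. (real (t choose j) * r^(t-j))^2)"
      unfolding cc_def by (rule sq_sum_le)
    also have "\<dots> \<le> real k * (\<Sum>j<k. real ((2*t) choose (2*j)) * r^(2*t-2*j))"
    proof (rule mult_left_mono[OF sum_mono])
      fix j
      have "(real (t choose j) * r^(t-j))^2 = real (t choose j)^2 * r^(2*t-2*j)"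
        by (simp add: power_mult_distrib power_mult[symmetric] diff_mult_distrib mult.commute)
      also have "\<dots> \<le> real ((2*t) choose (2*j)) * r^(2*t-2*j)"
        by (rule mult_right_mono[OF choose_sq_le]) (use r in simp)
      finally show "(real (t choose j) * r^(t-j))^2 \<le> real ((2*t) choose (2*j)) * r^(2*t-2*j)" .
    qed simp
    finally show "(cc k r t)^2 \<le> real k * (\<Sum>j<k. real ((2*t) choose (2*j)) * r^(2*t-2*j))" .
  qed
  also have "\<dots> = real k * (\<Sum>t<N. \<Sum>j<k. real ((2*t) choose (2*j)) * r^(2*t-2*j))"
    by (simp add: sum_distrib_left)
  also have "\<dots> = real k * (\<Sum>j<k. \<Sum>t<N. real ((2*t) choose (2*j)) * r^(2*t-2*j))"
    by (subst sum.swap) (rule refl)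
  also have "\<dots> \<le> real k * (\<Sum>j<k. 1/(1-r)^(2*k-1))"
  proof (rule mult_left_mono[OF sum_mono])
    fix j assume j: "j \<in> {..<k}"
    have "(\<Sum>t<N. real ((2*t) choose (2*j)) * r^(2*t-2*j)) = (\<Sum>u\<in>(\<lambda>t. 2*t) ` {..<N}. real (u choose (2*j)) * r^(u-2*j))"
      by (subst sum.reindex) (auto simp: inj_on_def)
    also have "\<dots> \<le> (\<Sum>u<2*N. real (u choose (2*j)) * r^(u-2*j))"
      by (rule sum_mono2) (use r in auto)
    also have "\<dots> \<le> 1/(1-r)^(2*j+1)" by (rule G_bound[OF r])
    also have "\<dots> = (1/(1-r))^(2*j+1)" by (simp add: power_one_over)
    also have "\<dots> \<le> (1/(1-r))^(2*k-1)"
      by (rule power_increasing) (use j r in auto)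
    also have "\<dots> = 1/(1-r)^(2*k-1)" by (simp add: power_one_over)
    finally show "(\<Sum>t<N. real ((2*t) choose (2*j)) * r^(2*t-2*j)) \<le> 1/(1-r)^(2*k-1)" .
  qed simp
  also have "\<dots> = real k^2 / (1-r)^(2*k-1)" by (simp add: power2_eq_square)
  finally show ?thesis .
qed

lemma sqrt_part_b: fixes r :: real assumes r: "0 \<le> r" "r < 1" and k: "k \<ge> 1"
  shows "sqrt (\<Sum>t<N. (cc k r t)^2) \<le> real k / (1-r) powr (real k - 1/2)"
proof -
  have pos: "0 < 1 - r" using r by simp
  have "(real k / (1-r) powr (real k - 1/2))^2 = real k^2 / ((1-r) powr (real k - 1/2))^2"
    by (simp add: power_divide)
  also have "((1-r) powr (real k - 1/2))^2 = (1-r) powr ((real k - 1/2) + (real k - 1/2))"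
    unfolding power2_eq_square by (rule powr_add[symmetric])
  also have "(real k - 1/2) + (real k - 1/2) = real (2*k-1)" using k by (simp add: of_nat_diff)
  also have "(1-r) powr real (2*k-1) = (1-r)^(2*k-1)" using pos by (simp add: powr_realpow)
  finally have eq: "(real k / (1-r) powr (real k - 1/2))^2 = real k^2 / (1-r)^(2*k-1)" .
  have "sqrt (\<Sum>t<N. (cc k r t)^2) \<le> sqrt ((real k / (1-r) powr (real k - 1/2))^2)"
    unfolding eq by (rule real_sqrt_le_mono[OF part_b[OF r k]])
  also have "\<dots> = real k / (1-r) powr (real k - 1/2)" by simp
  finally show ?thesis .
qed

lemma uniform_bound: assumes "\<And>t. t < N \<Longrightarrow> 0 \<le> f t \<and> f t \<le> Q" and "0 \<le> Q"
  shows "sqrt (\<Sum>t<N. (f t)^2) \<le> sqrt (real N) * (Q::real)"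
proof -
  have "(\<Sum>t<N. (f t)^2) \<le> (\<Sum>t<N. Q^2)"
    by (rule sum_mono) (use assms in \<open>auto intro: power_mono\<close>)
  then have "sqrt (\<Sum>t<N. (f t)^2) \<le> sqrt (real N * Q^2)" by (simp add: real_sqrt_le_mono)
  also have "\<dots> = sqrt (real N) * Q" using assms(2) by (simp add: real_sqrt_mult)
  finally show ?thesis .
qed

lemma sum_choose_le_pow2: "(\<Sum>j<k. t choose j) \<le> 2^t"
proof -
  have "(\<Sum>j<k. t choose j) = (\<Sum>j\<in>{..<k} \<inter> {..t}. t choose j)"
    by (rule sum.mono_neutral_right) (auto simp: binomial_eq_0)
  also have "\<dots> \<le> (\<Sum>j\<le>t. t choose j)" by (rule sum_mono2) auto
  also have "\<dots> = 2^t" by (rule choose_row_sum)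
  finally show ?thesis .
qed

lemma cc_le_sum: assumes "0 \<le> r" "r \<le> 1" shows "cc k r t \<le> real (\<Sum>j<k. t choose j)"
  unfolding cc_def of_nat_sum
proof (rule sum_mono)
  fix j show "real (t choose j) * r ^ (t - j) \<le> real (t choose j)"
    using assms by (simp add: mult_left_le power_le_one)
qed

lemma binom_tail: assumes "1 \<le> m" "m \<le> t"
  shows "real (\<Sum>j\<le>m. t choose j) \<le> (exp 1 * real t / real m)^m"
proof -
  define x where "x = real m / real t"
  have x: "0 < x" "x \<le> 1" using assms unfolding x_def by auto
  have "real (\<Sum>j\<le>m. t choose j) * x^m = (\<Sum>j\<le>m. real (t choose j) * x^m)"
    by (simp add: sum_distrib_right)
  also have "\<dots> \<le> (\<Sum>j\<le>m. real (t choose j) * x^j)"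
    by (rule sum_mono, rule mult_left_mono, rule power_decreasing) (use x in auto)
  also have "\<dots> \<le> (\<Sum>j\<le>t. real (t choose j) * x^j)"
    by (rule sum_mono2) (use assms x in simp_all)
  also have "\<dots> = (x + 1)^t" by (simp add: binomial_ring)
  also have "\<dots> \<le> (exp x)^t"
    by (rule power_mono) (use x in \<open>auto simp: add.commute exp_ge_add_one_self\<close>)
  also have "\<dots> = exp (real t * x)" by (simp add: exp_of_nat_mult)
  also have "real t * x = real m" using assms unfolding x_def by simp
  also have "exp (real m) = exp 1 ^ m" by (metis exp_of_nat_mult mult.right_neutral)
  finally have "real (\<Sum>j\<le>m. t choose j) \<le> exp 1 ^ m / x^m"
    using x by (simp add: pos_le_divide_eq)
  also have "\<dots> = (exp 1 * real t / real m)^m"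
    unfolding x_def by (simp add: power_divide power_mult_distrib)
  finally show ?thesis .
qed

lemma part_a: assumes r: "0 \<le> r" "r \<le> 1" and k: "k \<ge> 1" and N: "N \<ge> 1"
  shows "sqrt (\<Sum>t<N. (cc k r t)^2) \<le> Mtilde k N"
proof -
  have le2: "cc k r t \<le> 2^t" for t
  proof -
    have "cc k r t \<le> real (\<Sum>j<k. t choose j)" by (rule cc_le_sum[OF r])
    also have "\<dots> \<le> 2^t" using sum_choose_le_pow2[of t k]
    proof -
      have "real (\<Sum>j<k. t choose j) \<le> real ((2::nat)^t)" using sum_choose_le_pow2[of t k] of_nat_le_iff by blast
      then show ?thesis by simp
    qed
    finally show ?thesis .
  qed
  consider "k = 1" | "2 \<le> k \<and> k \<le> N + 1" | "\<not> (k = 1) \<and> \<not> (2 \<le> k \<and> k \<le> N + 1)" by blast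
  then show ?thesis
  proof cases
    case 1
    have "sqrt (\<Sum>t<N. (cc k r t)^2) \<le> sqrt (real N) * 1"
      by (rule uniform_bound) (use 1 r in \<open>auto simp: cc_def cc_nonneg power_le_one\<close>)
    then show ?thesis using 1 by (simp add: Mtilde_def)
  next
    case 2
    define m where "m = k - 1"
    have m: "1 \<le> m" "m \<le> N" "k = Suc m" using 2 unfolding m_def by auto
    define Q where "Q = (exp 1 * real N / real m)^m"
    have e2: "2 \<le> exp (1::real)" using exp_ge_add_one_self[of 1] by simp
    have NQ: "exp 1 \<le> exp 1 * real N / real m" using m by (simp add: field_simps)
    have Qnn: "0 \<le> Q" unfolding Q_def by simp
    have "sqrt (\<Sum>t<N. (cc k r t)^2) \<le> sqrt (real N) * Q"
    proof (rule uniform_bound[OF _ Qnn])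
      fix t assume t: "t < N"
      have "cc k r t \<le> Q"
      proof (cases "t < m")
        case True
        have "cc k r t \<le> 2^t" by (rule le2)
        also have "(2::real)^t \<le> 2^m" using True by (simp add: power_increasing)
        also have "(2::real)^m \<le> exp 1 ^ m" by (rule power_mono[OF e2]) simp
        also have "\<dots> \<le> Q" unfolding Q_def by (rule power_mono[OF NQ]) simp
        finally show ?thesis .
      next
        case False
        have "cc k r t \<le> real (\<Sum>j<k. t choose j)" by (rule cc_le_sum[OF r])
        also have "(\<Sum>j<k. t choose j) = (\<Sum>j\<le>m. t choose j)" using m by (simp add: lessThan_Suc_atMost)
        also have "real \<dots> \<le> (exp 1 * real t / real m)^m" by (rule binom_tail) (use m False in auto)
        also have "\<dots> \<le> Q" unfolding Q_def
          by (rule power_mono) (use t m in \<open>auto simp: divide_right_mono\<close>)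
        finally show ?thesis .
      qed
      then show "0 \<le> cc k r t \<and> cc k r t \<le> Q" using cc_nonneg[OF r(1)] by simp
    qed
    also have "sqrt (real N) * Q = real N powr (real k - 1/2) * (exp 1 / (real k - 1)) ^ (k - 1)"
    proof -
      have "real N powr (real k - 1/2) = real N powr (real m + 1/2)" using m by (simp add: add.commute)
      also have "\<dots> = real N ^ m * sqrt (real N)"
        using N by (simp add: powr_add powr_realpow powr_half_sqrt)
      finally have "real N powr (real k - 1/2) = real N ^ m * sqrt (real N)" .
      moreover have "real k - 1 = real m" using m by simp
      ultimately show ?thesis unfolding Q_def m_def[symmetric]
        by (simp add: power_mult_distrib power_divide)
    qed
    finally show ?thesis using 2 by (simp add: Mtilde_def)
  next
    case 3
    have "sqrt (\<Sum>t<N. (cc k r t)^2) \<le> sqrt (real N) * 2^N"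
    proof (rule uniform_bound)
      fix t assume "t < N"
      then have "cc k r t \<le> 2^N" using le2[of t] by (meson less_imp_le one_le_numeral order_trans power_increasing)
      then show "0 \<le> cc k r t \<and> cc k r t \<le> 2^N" using cc_nonneg[OF r(1)] by simp
    qed simp
    then show ?thesis using 3 unfolding Mtilde_def by auto
  qed
qed

lemma scalar_main: assumes k: "k \<ge> 1" and N: "N \<ge> 1" and lam: "cmod lam \<le> 1"
  shows "sqrt (\<Sum>t<N. (cc k (cmod lam) t)^2) \<le> Mfun k lam N"
proof (cases "cmod lam < 1")
  case True
  then show ?thesis unfolding Mfun_def
    using sqrt_part_b[OF norm_ge_zero True k] part_a[OF norm_ge_zero lam k N] by simp
next
  case False
  then show ?thesis unfolding Mfun_def using part_a[OF norm_ge_zero lam k N] by simp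
qed

lemma L2_sum_tri: "finite F \<Longrightarrow> L2_set (\<lambda>i. cmod (\<Sum>a\<in>F. f a i)) I \<le> (\<Sum>a\<in>F. L2_set (\<lambda>i. cmod (f a i)) I)"
proof (induction F rule: finite_induct)
  case empty then show ?case by (simp add: L2_set_0')
next
  case (insert a F)
  have "L2_set (\<lambda>i. cmod (\<Sum>b\<in>insert a F. f b i)) I = L2_set (\<lambda>i. cmod (f a i + (\<Sum>b\<in>F. f b i))) I"
    using insert by simp
  also have "\<dots> \<le> L2_set (\<lambda>i. cmod (f a i) + cmod (\<Sum>b\<in>F. f b i)) I"
    by (rule L2_set_mono) (auto simp: norm_triangle_ineq)
  also have "\<dots> \<le> L2_set (\<lambda>i. cmod (f a i)) I + L2_set (\<lambda>i. cmod (\<Sum>b\<in>F. f b i)) I"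
    by (rule L2_set_triangle_ineq)
  also have "\<dots> \<le> L2_set (\<lambda>i. cmod (f a i)) I + (\<Sum>b\<in>F. L2_set (\<lambda>i. cmod (f b i)) I)"
    using insert by simp
  finally show ?case using insert by simp
qed

lemma L2_sq: "finite A \<Longrightarrow> (L2_set f A)^2 = (\<Sum>i\<in>A. (f i)^2)"
  unfolding L2_set_def by (simp add: sum_nonneg)

lemma R1: fixes k i :: nat shows "(\<Sum>j<k. if i \<le> j then h (j-i) else 0) = (\<Sum>s<k-i. h s)"
proof (induction k)
  case 0 then show ?case by simp
next
  case (Suc k)
  show ?case
  proof (cases "i \<le> k")
    case True
    then have "Suc k - i = Suc (k - i)" by simp
    then show ?thesis using Suc True by simp
  next
    case False
    then show ?thesis using Suc by simp
  qed
qed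

lemma R2: fixes k i :: nat shows "(\<Sum>s<k. if i + s < k then h s else 0) = (\<Sum>s<k-i. h s)"
proof -
  have "(\<Sum>s<k. if i + s < k then h s else 0) = (\<Sum>s\<in>{s\<in>{..<k}. i + s < k}. h s)"
    by (rule sum.inter_filter[symmetric]) simp
  also have "{s\<in>{..<k}. i + s < k} = {..<k-i}" by auto
  finally show ?thesis .
qed

lemma sum_split_add: fixes k r :: nat shows "(\<Sum>j<k+r. f j) = (\<Sum>j<k. f j) + (\<Sum>j<r. f (k+j))"
  by (induction r) (auto simp: add.assoc)

definition blk_ineq :: "complex mat \<Rightarrow> nat \<Rightarrow> real \<Rightarrow> nat \<Rightarrow> bool" where
  "blk_ineq M n K N = (\<forall>Y. L2_set (\<lambda>i. cmod (\<Sum>t<N. \<Sum>j<n. (M ^\<^sub>m t) $$ (i,j) * Y t j)) {..<n}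
      \<le> K * sqrt (\<Sum>t<N. (L2_set (\<lambda>j. cmod (Y t j)) {..<n})^2))"

lemma blk_ineq_mono: "blk_ineq M n K N \<Longrightarrow> K \<le> K' \<Longrightarrow> blk_ineq M n K' N"
  unfolding blk_ineq_def
  by (meson mult_right_mono order_trans real_sqrt_ge_zero sum_nonneg zero_le_power2)

lemma shift_L2: fixes k s :: nat shows "L2_set (\<lambda>i. cmod (if i + s < k then y (i+s) else 0)) {..<k} \<le> L2_set (\<lambda>j. cmod (y j)) {..<k}"
proof -
  have "(\<Sum>i<k. (cmod (if i + s < k then y (i+s) else 0))^2) = (\<Sum>i<k. if i + s < k then (cmod (y (i+s)))^2 else 0)"
    by (rule sum.cong) auto
  also have "\<dots> = (\<Sum>i<k-s. (cmod (y (i+s)))^2)" by (subst add.commute) (rule R2)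
  also have "\<dots> = (\<Sum>j\<in>(\<lambda>i. i+s) ` {..<k-s}. (cmod (y j))^2)"
    by (subst sum.reindex) (auto simp: inj_on_def)
  also have "\<dots> \<le> (\<Sum>j<k. (cmod (y j))^2)" by (rule sum_mono2) auto
  finally show ?thesis unfolding L2_set_def by (rule real_sqrt_le_mono)
qed

lemma jordan_block_ineq: "blk_ineq (jordan_block k lam) k (sqrt (\<Sum>t<N. (cc k (cmod lam) t)^2)) N"
  unfolding blk_ineq_def
proof
  fix Y :: "nat \<Rightarrow> nat \<Rightarrow> complex"
  define a where "a t s = of_nat (t choose s) * lam ^ (t - s)" for t s
  define Z where "Z t s i = (if i + s < k then Y t (i+s) else 0)" for t s i
  define LY where "LY t = L2_set (\<lambda>j. cmod (Y t j)) {..<k}" for t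
  have row: "(\<Sum>j<k. (jordan_block k lam ^\<^sub>m t) $$ (i,j) * Y t j) = (\<Sum>s<k. a t s * Z t s i)"
    if i: "i < k" for i t
  proof -
    have "(\<Sum>j<k. (jordan_block k lam ^\<^sub>m t) $$ (i,j) * Y t j)
        = (\<Sum>j<k. if i \<le> j then a t (j - i) * Y t (i + (j - i)) else 0)"
      by (rule sum.cong) (use i in \<open>auto simp: jordan_block_pow a_def\<close>)
    also have "\<dots> = (\<Sum>s<k-i. a t s * Y t (i + s))" by (rule R1)
    also have "\<dots> = (\<Sum>s<k. if i + s < k then a t s * Y t (i + s) else 0)" by (rule R2[symmetric])
    also have "\<dots> = (\<Sum>s<k. a t s * Z t s i)" by (rule sum.cong) (auto simp: Z_def)
    finally show ?thesis .
  qed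
  have "L2_set (\<lambda>i. cmod (\<Sum>t<N. \<Sum>j<k. (jordan_block k lam ^\<^sub>m t) $$ (i,j) * Y t j)) {..<k}
      = L2_set (\<lambda>i. cmod (\<Sum>t<N. \<Sum>s<k. a t s * Z t s i)) {..<k}"
    by (rule L2_set_cong) (auto simp: row)
  also have "\<dots> \<le> (\<Sum>t<N. L2_set (\<lambda>i. cmod (\<Sum>s<k. a t s * Z t s i)) {..<k})"
    by (rule L2_sum_tri) simp
  also have "\<dots> \<le> (\<Sum>t<N. \<Sum>s<k. L2_set (\<lambda>i. cmod (a t s * Z t s i)) {..<k})"
    by (rule sum_mono, rule L2_sum_tri) simp
  also have "\<dots> \<le> (\<Sum>t<N. \<Sum>s<k. cmod (a t s) * LY t)"
  proof (rule sum_mono, rule sum_mono)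
    fix t s
    have "L2_set (\<lambda>i. cmod (a t s * Z t s i)) {..<k} = cmod (a t s) * L2_set (\<lambda>i. cmod (Z t s i)) {..<k}"
      by (simp add: L2_set_right_distrib norm_mult)
    also have "\<dots> \<le> cmod (a t s) * LY t"
      unfolding LY_def Z_def by (rule mult_left_mono[OF shift_L2]) simp
    finally show "L2_set (\<lambda>i. cmod (a t s * Z t s i)) {..<k} \<le> cmod (a t s) * LY t" .
  qed
  also have "\<dots> = (\<Sum>t<N. cc k (cmod lam) t * LY t)"
    by (simp add: cc_def a_def sum_distrib_right norm_mult norm_power)
  also have "\<dots> \<le> (\<Sum>t<N. \<bar>cc k (cmod lam) t\<bar> * \<bar>LY t\<bar>)" by (rule sum_mono) (metis abs_ge_self abs_mult)
  also have "\<dots> \<le> L2_set (cc k (cmod lam)) {..<N} * L2_set LY {..<N}" by (rule L2_set_mult_ineq)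
  also have "\<dots> = sqrt (\<Sum>t<N. (cc k (cmod lam) t)^2) * sqrt (\<Sum>t<N. (L2_set (\<lambda>j. cmod (Y t j)) {..<k})^2)"
    by (simp add: L2_set_def LY_def)
  finally show "L2_set (\<lambda>i. cmod (\<Sum>t<N. \<Sum>j<k. (jordan_block k lam ^\<^sub>m t) $$ (i,j) * Y t j)) {..<k}
      \<le> sqrt (\<Sum>t<N. (cc k (cmod lam) t)^2) * sqrt (\<Sum>t<N. (L2_set (\<lambda>j. cmod (Y t j)) {..<k})^2)" .
qed

lemma jm_ineq: assumes K: "0 \<le> K"
  shows "(\<forall>(k,lam)\<in>set n_as. blk_ineq (jordan_block k lam) k K N)
    \<Longrightarrow> blk_ineq (jordan_matrix n_as) (sum_list (map fst n_as)) K N"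
proof (induction n_as)
  case Nil
  then show ?case unfolding blk_ineq_def using K by simp
next
  case (Cons kl rest)
  obtain k lam where kl: "kl = (k, lam)" by force
  define r where "r = sum_list (map fst rest)"
  have IH: "blk_ineq (jordan_matrix rest) r K N" using Cons kl unfolding r_def by auto
  have BL: "blk_ineq (jordan_block k lam) k K N" using Cons.prems kl by auto
  let ?Jb = "jordan_block k lam" and ?Jr = "jordan_matrix rest"
  have Jr: "?Jr \<in> carrier_mat r r" unfolding r_def by simp
  have JJ: "jordan_matrix (kl # rest) = four_block_mat ?Jb (0\<^sub>m k r) (0\<^sub>m r k) ?Jr"
    unfolding kl r_def by (rule jordan_matrix_Cons)
  have pw: "jordan_matrix (kl # rest) ^\<^sub>m t = four_block_mat (?Jb ^\<^sub>m t) (0\<^sub>m k r) (0\<^sub>m r k) (?Jr ^\<^sub>m t)" for t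
    unfolding JJ by (rule pow_four_block_mat[OF jordan_block_carrier Jr])
  have dJr: "dim_row (?Jr ^\<^sub>m t) = r" "dim_col (?Jr ^\<^sub>m t) = r" for t using Jr by auto
  have dJb: "dim_row (?Jb ^\<^sub>m t) = k" "dim_col (?Jb ^\<^sub>m t) = k" "dim_row ?Jb = k" "dim_col ?Jb = k" for t by auto
  have dim: "sum_list (map fst (kl # rest)) = k + r" unfolding kl r_def by simp
  show ?case unfolding blk_ineq_def dim
  proof
    fix Y :: "nat \<Rightarrow> nat \<Rightarrow> complex"
    define W where "W i = cmod (\<Sum>t<N. \<Sum>j<k+r. (jordan_matrix (kl # rest) ^\<^sub>m t) $$ (i,j) * Y t j)" for i
    define Lb where "Lb = L2_set (\<lambda>i. cmod (\<Sum>t<N. \<Sum>j<k. (?Jb ^\<^sub>m t) $$ (i,j) * Y t j)) {..<k}"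
    define Lr where "Lr = L2_set (\<lambda>i. cmod (\<Sum>t<N. \<Sum>j<r. (?Jr ^\<^sub>m t) $$ (i,j) * Y t (k+j))) {..<r}"
    define Sb where "Sb = (\<Sum>t<N. (L2_set (\<lambda>j. cmod (Y t j)) {..<k})^2)"
    define Sr where "Sr = (\<Sum>t<N. (L2_set (\<lambda>j. cmod (Y t (k+j))) {..<r})^2)"
    define S where "S = (\<Sum>t<N. (L2_set (\<lambda>j. cmod (Y t j)) {..<k+r})^2)"
    have Lb: "Lb \<le> K * sqrt Sb" using BL unfolding blk_ineq_def Lb_def Sb_def by blast
    have Lr: "Lr \<le> K * sqrt Sr" using IH unfolding blk_ineq_def Lr_def Sr_def
      by (rule allE[of _ "\<lambda>t j. Y t (k+j)"])
    have Sb0: "0 \<le> Sb" "0 \<le> Sr" unfolding Sb_def Sr_def by (auto intro: sum_nonneg)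
    have S: "S = Sb + Sr"
      unfolding S_def Sb_def Sr_def by (simp add: L2_sq sum_split_add sum.distrib)
    have top: "W i = cmod (\<Sum>t<N. \<Sum>j<k. (?Jb ^\<^sub>m t) $$ (i,j) * Y t j)" if "i < k" for i
      unfolding W_def pw sum_split_add using that dJr dJb by (auto intro!: sum.cong arg_cong[where f=cmod])
    have bot: "W (k+i) = cmod (\<Sum>t<N. \<Sum>j<r. (?Jr ^\<^sub>m t) $$ (i,j) * Y t (k+j))" if "i < r" for i
      unfolding W_def pw sum_split_add using that dJr dJb by (auto intro!: sum.cong arg_cong[where f=cmod])
    have "(L2_set W {..<k+r})^2 = Lb^2 + Lr^2"
      unfolding L2_sq[OF finite_lessThan] sum_split_add Lb_def Lr_def
      by (simp add: L2_sq top bot)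
    also have "\<dots> \<le> (K * sqrt Sb)^2 + (K * sqrt Sr)^2"
      by (intro add_mono power_mono Lb Lr) (auto simp: Lb_def Lr_def)
    also have "\<dots> = (K * sqrt S)^2" using Sb0 S by (simp add: power_mult_distrib algebra_simps)
    finally have "L2_set W {..<k+r} \<le> K * sqrt S"
      by (rule power2_le_imp_le) (use K Sb0 S in simp)
    then show "L2_set (\<lambda>i. cmod (\<Sum>t<N. \<Sum>j<k + r. (jordan_matrix (kl # rest) ^\<^sub>m t) $$ (i, j) * Y t j)) {..<k + r}
         \<le> K * sqrt (\<Sum>t<N. (L2_set (\<lambda>j. cmod (Y t j)) {..<k + r})\<^sup>2)"
      unfolding W_def S_def .
  qed
qed

lemma vec_norm2_L2: "vec_norm2 x = L2_set (\<lambda>i. cmod (x $ i)) {..<dim_vec x}"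
  unfolding vec_norm2_def L2_set_def by simp

lemma vec_norm2_nonneg: "0 \<le> vec_norm2 x"
  unfolding vec_norm2_def by (simp add: sum_nonneg)

lemma vec_norm2_smult: "vec_norm2 (a \<cdot>\<^sub>v v) = cmod a * vec_norm2 v"
  unfolding vec_norm2_L2 L2_set_right_distrib[OF norm_ge_zero] by (intro L2_set_cong) (auto simp: norm_mult)

lemma vec_norm2_add: assumes "dim_vec u = dim_vec v"
  shows "vec_norm2 (u + v) \<le> vec_norm2 u + vec_norm2 v"
proof -
  have "vec_norm2 (u + v) = L2_set (\<lambda>i. cmod (u $ i + v $ i)) {..<dim_vec v}"
    unfolding vec_norm2_L2 using assms by (intro L2_set_cong) auto
  also have "\<dots> \<le> L2_set (\<lambda>i. cmod (u $ i) + cmod (v $ i)) {..<dim_vec v}"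
    by (rule L2_set_mono) (auto simp: norm_triangle_ineq)
  also have "\<dots> \<le> vec_norm2 u + vec_norm2 v"
    unfolding vec_norm2_L2 using assms by (simp add: L2_set_triangle_ineq)
  finally show ?thesis .
qed

lemma mult_mat_vec_index: "i < dim_row M \<Longrightarrow> dim_vec v = dim_col M \<Longrightarrow>
   (M *\<^sub>v v) $ i = (\<Sum>j<dim_col M. M $$ (i,j) * v $ j)"
  by (simp add: scalar_prod_def atLeast0LessThan)

lemma op_norm_bdd: "bdd_above {vec_norm2 (M *\<^sub>v x) | x. x \<in> carrier_vec (dim_col M) \<and> vec_norm2 x \<le> 1}"
proof (rule bdd_aboveI)
  fix y assume "y \<in> {vec_norm2 (M *\<^sub>v x) | x. x \<in> carrier_vec (dim_col M) \<and> vec_norm2 x \<le> 1}"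
  then obtain x where x: "x \<in> carrier_vec (dim_col M)" "vec_norm2 x \<le> 1" and y: "y = vec_norm2 (M *\<^sub>v x)" by blast
  have xj: "cmod (x $ j) \<le> 1" if "j < dim_col M" for j
  proof -
    have "cmod (x $ j) \<le> vec_norm2 x" unfolding vec_norm2_L2
      by (rule member_le_L2_set) (use x that in auto)
    then show ?thesis using x by simp
  qed
  have "y \<le> (\<Sum>i<dim_row M. cmod ((M *\<^sub>v x) $ i))"
    unfolding y vec_norm2_L2 dim_mult_mat_vec by (rule L2_set_le_sum) simp
  also have "\<dots> \<le> (\<Sum>i<dim_row M. \<Sum>j<dim_col M. cmod (M $$ (i,j)))"
  proof (rule sum_mono)
    fix i assume i: "i \<in> {..<dim_row M}"
    have "cmod ((M *\<^sub>v x) $ i) = cmod (\<Sum>j<dim_col M. M $$ (i,j) * x $ j)"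
      using i x mult_mat_vec_index[of i M x] by auto
    also have "\<dots> \<le> (\<Sum>j<dim_col M. cmod (M $$ (i,j) * x $ j))" by (rule norm_sum)
    also have "\<dots> \<le> (\<Sum>j<dim_col M. cmod (M $$ (i,j)))"
      by (rule sum_mono) (auto simp: norm_mult intro: mult_left_le xj)
    finally show "cmod ((M *\<^sub>v x) $ i) \<le> (\<Sum>j<dim_col M. cmod (M $$ (i,j)))" .
  qed
  finally show "y \<le> (\<Sum>i<dim_row M. \<Sum>j<dim_col M. cmod (M $$ (i,j)))" .
qed

lemma op_norm_upper: "x \<in> carrier_vec (dim_col M) \<Longrightarrow> vec_norm2 x \<le> 1 \<Longrightarrow> vec_norm2 (M *\<^sub>v x) \<le> op_norm M"
  unfolding op_norm_def by (rule cSup_upper[OF _ op_norm_bdd]) blast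

lemma op_norm_nonneg: "0 \<le> op_norm M"
proof -
  have "vec_norm2 (M *\<^sub>v 0\<^sub>v (dim_col M)) \<le> op_norm M"
    by (rule op_norm_upper) (auto simp: vec_norm2_def)
  then show ?thesis using vec_norm2_nonneg order_trans by blast
qed

lemma op_norm_le: assumes "\<And>x. x \<in> carrier_vec (dim_col M) \<Longrightarrow> vec_norm2 x \<le> 1 \<Longrightarrow> vec_norm2 (M *\<^sub>v x) \<le> K"
  shows "op_norm M \<le> K"
  unfolding op_norm_def
proof (rule cSup_least)
  have "0\<^sub>v (dim_col M) \<in> carrier_vec (dim_col M) \<and> vec_norm2 (0\<^sub>v (dim_col M) :: complex vec) \<le> 1"
    by (simp add: vec_norm2_def)
  then show "{vec_norm2 (M *\<^sub>v x) | x. x \<in> carrier_vec (dim_col M) \<and> vec_norm2 x \<le> 1} \<noteq> {}"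
    by blast
qed (use assms in auto)

lemma op_norm_bound: assumes x: "x \<in> carrier_vec (dim_col M)"
  shows "vec_norm2 (M *\<^sub>v x) \<le> op_norm M * vec_norm2 x"
proof (cases "vec_norm2 x = 0")
  case True
  then have "\<forall>j\<in>{..<dim_vec x}. cmod (x $ j) = 0" unfolding vec_norm2_L2
    by (subst (asm) L2_set_eq_0_iff) auto
  then have "x = 0\<^sub>v (dim_col M)" using x by (intro eq_vecI) auto
  then have "M *\<^sub>v x = 0\<^sub>v (dim_row M)" by (intro eq_vecI) (auto simp: scalar_prod_def)
  then show ?thesis using True by (simp add: vec_norm2_def)
next
  case False
  define c where "c = vec_norm2 x"
  have c: "0 < c" using False vec_norm2_nonneg[of x] unfolding c_def by simp
  define x' where "x' = complex_of_real (1/c) \<cdot>\<^sub>v x"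
  have "vec_norm2 x' = 1" using c unfolding x'_def vec_norm2_smult c_def[symmetric] by (simp add: norm_divide)
  then have "vec_norm2 (M *\<^sub>v x') \<le> op_norm M" by (intro op_norm_upper) (use x in \<open>auto simp: x'_def\<close>)
  moreover have "M *\<^sub>v x' = complex_of_real (1/c) \<cdot>\<^sub>v (M *\<^sub>v x)"
    unfolding x'_def by (rule mult_mat_vec[OF carrier_matI x]) auto
  ultimately have "(1/c) * vec_norm2 (M *\<^sub>v x) \<le> op_norm M" using c by (simp add: vec_norm2_smult norm_divide)
  then show ?thesis using c unfolding c_def[symmetric] by (simp add: field_simps)
qed

lemma poly_prod_zero: fixes lam :: complex shows "(k, lam) \<in> set xs \<Longrightarrow> k > 0 \<Longrightarrow> poly (\<Prod>(n, a)\<leftarrow>xs. [:- a, 1:] ^ n) lam = 0"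
  by (induction xs) (auto simp: add.left_inverse zero_power)

lemma eig_bound: assumes d: "d > 0" and A: "A \<in> carrier_mat d d"
  and sim: "similar_mat_wit A (jordan_matrix n_as) S Sinv"
  and sr: "spectral_radius A \<le> 1"
  and kl: "(k, lam) \<in> set n_as" and k: "k > 0"
  shows "cmod lam \<le> 1"
proof -
  have "similar_mat A (jordan_matrix n_as)" using sim unfolding similar_mat_def by blast
  then have cp: "char_poly A = (\<Prod>(n, a)\<leftarrow>n_as. [:- a, 1:] ^ n)"
    by (simp add: char_poly_similar jordan_matrix_char_poly)
  have "poly (char_poly A) lam = 0" unfolding cp using kl k by (rule poly_prod_zero)
  then have "lam \<in> spectrum A" using spectrum_root_char_poly[OF A] by simp
  then have "norm lam \<le> spectral_radius A" using spectral_radius_mem_max(2)[OF A d] by blast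
  then show ?thesis using sr by simp
qed

lemma markov_dim[simp]: "dim_row (markov_mat k A B C D) = dim_row D" "dim_col (markov_mat k A B C D) = k * dim_col D"
  unfolding markov_mat_def by auto

lemma markov_index: "i < dim_row D \<Longrightarrow> c < k * dim_col D \<Longrightarrow> markov_mat k A B C D $$ (i,c) =
  (if c div dim_col D = 0 then D $$ (i, c mod dim_col D)
   else (C * (A ^\<^sub>m (c div dim_col D - 1)) * B) $$ (i, c mod dim_col D))"
  unfolding markov_mat_def by simp

lemma sum_blocks: fixes k m :: nat shows "(\<Sum>c<k*m. f c) = (\<Sum>b<k. \<Sum>l<m. f (b*m+l))"
proof (induction k)
  case 0 then show ?case by simp
next
  case (Suc k)
  have "Suc k * m = k * m + m" by simp
  then show ?case using Suc by (simp only: sum_split_add sum.lessThan_Suc)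
qed

lemma markov_mono: "op_norm (markov_mat n A B C D) \<le> op_norm (markov_mat (n + 1) A B C D)"
proof (rule op_norm_le)
  fix x :: "complex vec"
  assume x: "x \<in> carrier_vec (dim_col (markov_mat n A B C D))" and x1: "vec_norm2 x \<le> 1"
  define m where "m = dim_col D"
  have dx: "dim_vec x = n * m" using x unfolding m_def by simp
  have nm: "(n + 1) * m = n * m + m" by simp
  define x' where "x' = vec ((n+1)*m) (\<lambda>c. if c < n*m then x $ c else 0)"
  have x'c: "x' \<in> carrier_vec (dim_col (markov_mat (n+1) A B C D))" unfolding x'_def m_def by simp
  have "vec_norm2 x' = vec_norm2 x"
    unfolding vec_norm2_def x'_def dim_vec nm sum_split_add dx by simp
  then have x'1: "vec_norm2 x' \<le> 1" using x1 by simp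
  have eq: "markov_mat (n+1) A B C D *\<^sub>v x' = markov_mat n A B C D *\<^sub>v x"
  proof (rule eq_vecI)
    fix i assume "i < dim_vec (markov_mat n A B C D *\<^sub>v x)"
    then have i: "i < dim_row D" by simp
    have "(markov_mat (n+1) A B C D *\<^sub>v x') $ i = (\<Sum>c<(n+1)*m. markov_mat (n+1) A B C D $$ (i,c) * x' $ c)"
      by (subst mult_mat_vec_index) (use i in \<open>auto simp: x'_def m_def\<close>)
    also have "\<dots> = (\<Sum>c<n*m. markov_mat (n+1) A B C D $$ (i,c) * x $ c)"
      unfolding nm sum_split_add by (simp add: x'_def)
    also have "\<dots> = (\<Sum>c<n*m. markov_mat n A B C D $$ (i,c) * x $ c)"
    proof (rule sum.cong)
      fix c assume "c \<in> {..<n*m}"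
      then have "c < n * m" "c < (n+1) * m" by auto
      then show "markov_mat (n+1) A B C D $$ (i,c) * x $ c = markov_mat n A B C D $$ (i,c) * x $ c"
        using i by (simp add: markov_index m_def)
    qed simp
    also have "\<dots> = (markov_mat n A B C D *\<^sub>v x) $ i"
      by (subst mult_mat_vec_index) (use i dx in \<open>auto simp: m_def\<close>)
    finally show "(markov_mat (n+1) A B C D *\<^sub>v x') $ i = (markov_mat n A B C D *\<^sub>v x) $ i" .
  qed simp
  have "vec_norm2 (markov_mat (n+1) A B C D *\<^sub>v x') \<le> op_norm (markov_mat (n+1) A B C D) * vec_norm2 x'"
    by (rule op_norm_bound[OF x'c])
  also have "\<dots> \<le> op_norm (markov_mat (n+1) A B C D)"
    using x'1 op_norm_nonneg by (simp add: mult_left_le)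
  finally show "vec_norm2 (markov_mat n A B C D *\<^sub>v x) \<le> op_norm (markov_mat (n+1) A B C D)"
    unfolding eq .
qed

lemma K2_facts: assumes d: "d > 0" and A: "A \<in> carrier_mat d d"
  and sim: "similar_mat_wit A (jordan_matrix n_as) S Sinv"
  and sr: "spectral_radius A \<le> 1" and n: "n \<ge> 1"
  shows "0 \<le> K2 n_as n" "\<forall>(k,lam)\<in>set n_as. blk_ineq (jordan_block k lam) k (K2 n_as n) n"
proof -
  have fin: "finite (blkspec n_as)"
  proof (rule finite_subset)
    show "blkspec n_as \<subseteq> (\<lambda>(k,l). (l,k)) ` set n_as" unfolding blkspec_def by force
  qed simp
  have ge: "sqrt (\<Sum>t<n. (cc k (cmod lam) t)^2) \<le> K2 n_as n" if kl: "(k,lam) \<in> set n_as" and k: "k > 0" for k lam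
  proof -
    have "cmod lam \<le> 1" by (rule eig_bound[OF d A sim sr kl k])
    then have "sqrt (\<Sum>t<n. (cc k (cmod lam) t)^2) \<le> Mfun k lam n"
      by (intro scalar_main) (use k n in auto)
    also have "Mfun k lam n \<le> K2 n_as n" unfolding K2_def
    proof (rule Max_ge)
      show "finite ((\<lambda>(lam, k). Mfun k lam n) ` blkspec n_as)" using fin by simp
      have "(lam, k) \<in> blkspec n_as" unfolding blkspec_def using kl k by auto
      then show "Mfun k lam n \<in> (\<lambda>(lam, k). Mfun k lam n) ` blkspec n_as" by force
    qed
    finally show ?thesis .
  qed
  have "jordan_matrix n_as \<in> carrier_mat d d" using sim A unfolding similar_mat_wit_def Let_def by auto
  then have "sum_list (map fst n_as) = d" by (metis carrier_matD(1) jordan_matrix_dim(1))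
  then have "\<exists>x\<in>set (map fst n_as). x \<noteq> 0" using d by (metis sum_list_eq_0_iff less_numeral_extra(3))
  then obtain k lam where kl: "(k,lam) \<in> set n_as" and k: "k > 0" by auto
  show K0: "0 \<le> K2 n_as n" using ge[OF kl k] by (meson order_trans real_sqrt_ge_zero sum_nonneg zero_le_power2)
  show "\<forall>(k,lam)\<in>set n_as. blk_ineq (jordan_block k lam) k (K2 n_as n) n"
  proof (intro ballI, clarify)
    fix k lam assume kl: "(k, lam) \<in> set n_as"
    show "blk_ineq (jordan_block k lam) k (K2 n_as n) n"
    proof (cases "k = 0")
      case True
      then show ?thesis unfolding blk_ineq_def using K0 by simp
    next
      case False
      then show ?thesis using blk_ineq_mono[OF jordan_block_ineq ge[OF kl]] by simp
    qed
  qed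
qed

lemma markov_bound:
  fixes A B C D S Sinv :: "complex mat" and n_as :: "(nat \<times> complex) list"
    and d m p n :: nat
  assumes d: "d > 0"
    and A: "A \<in> carrier_mat d d" and B: "B \<in> carrier_mat d m"
    and C: "C \<in> carrier_mat p d" and D: "D \<in> carrier_mat p m"
    and sim: "similar_mat_wit A (jordan_matrix n_as) S Sinv"
    and sr: "spectral_radius A \<le> 1"
    and n: "n \<ge> 1"
  shows "op_norm (markov_mat (n + 1) A B C D)
           \<le> op_norm D + op_norm (Sinv * B) * op_norm (C * S) * K2 n_as n"
proof (rule op_norm_le)
  define J where "J = jordan_matrix n_as"
  define K where "K = K2 n_as n"
  have K0: "0 \<le> K" and blocks: "\<forall>(k,lam)\<in>set n_as. blk_ineq (jordan_block k lam) k K n"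
    using K2_facts[OF d A sim sr n] unfolding K_def by auto
  have J: "J \<in> carrier_mat d d" and S: "S \<in> carrier_mat d d" and Si: "Sinv \<in> carrier_mat d d"
    and AJ: "A = S * J * Sinv"
    using sim A unfolding similar_mat_wit_def Let_def J_def by auto
  have dJ: "sum_list (map fst n_as) = d" using J unfolding J_def by (metis carrier_matD(1) jordan_matrix_dim(1))
  have Jineq: "blk_ineq J d K n" using jm_ineq[OF K0 blocks] dJ unfolding J_def by simp
  have Apow: "A ^\<^sub>m t = S * J ^\<^sub>m t * Sinv" for t
    using similar_mat_wit_pow_id[OF sim] unfolding J_def by simp
  have dD: "dim_col D = m" "dim_row D = p" using D by auto
  fix x :: "complex vec"
  assume x: "x \<in> carrier_vec (dim_col (markov_mat (n + 1) A B C D))" and x1: "vec_norm2 x \<le> 1"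
  have dx: "dim_vec x = (n+1) * m" using x dD by simp
  define xb where "xb b = vec m (\<lambda>l. x $ (b*m+l))" for b
  have xbc: "xb b \<in> carrier_vec m" for b unfolding xb_def by simp
  define y where "y t = (Sinv * B) *\<^sub>v xb (Suc t)" for t
  have SB: "Sinv * B \<in> carrier_mat d m" using Si B by (rule mult_carrier_mat)
  have yc: "y t \<in> carrier_vec d" for t unfolding y_def using SB xbc[of "Suc t"] by (rule mult_mat_vec_carrier)
  have dy: "dim_vec (y t) = d" for t by (metis carrier_vecD yc)
  define w where "w = vec d (\<lambda>j. \<Sum>t<n. \<Sum>l<d. (J ^\<^sub>m t) $$ (j,l) * y t $ l)"
  have CS: "C * S \<in> carrier_mat p d" using C S by (rule mult_carrier_mat)
  have nsq: "(vec_norm2 x)^2 = (vec_norm2 (xb 0))^2 + (\<Sum>t<n. (vec_norm2 (xb (Suc t)))^2)"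
  proof -
    have "(vec_norm2 x)^2 = (\<Sum>c<(n+1)*m. (cmod (x $ c))^2)"
      unfolding vec_norm2_def dx by (simp add: sum_nonneg)
    also have "\<dots> = (\<Sum>b<n+1. \<Sum>l<m. (cmod (x $ (b*m+l)))^2)" by (rule sum_blocks)
    also have "\<dots> = (\<Sum>b<n+1. (vec_norm2 (xb b))^2)"
      unfolding vec_norm2_def xb_def by (simp add: sum_nonneg)
    also have "\<dots> = (vec_norm2 (xb 0))^2 + (\<Sum>t<n. (vec_norm2 (xb (Suc t)))^2)"
      unfolding Suc_eq_plus1[symmetric] by (rule sum.lessThan_Suc_shift)
    finally show ?thesis .
  qed
  have x1sq: "(vec_norm2 x)^2 \<le> 1" using x1 vec_norm2_nonneg[of x] by (simp add: power_le_one)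
  have xb0: "vec_norm2 (xb 0) \<le> 1"
  proof -
    have "(vec_norm2 (xb 0))^2 \<le> 1" using nsq x1sq by (smt (verit) sum_nonneg zero_le_power2)
    then show ?thesis using vec_norm2_nonneg by (simp add: power_le_one_iff)
  qed
  have xbs: "(\<Sum>t<n. (vec_norm2 (xb (Suc t)))^2) \<le> 1"
    using nsq x1sq by (smt (verit) zero_le_power2)
  have Mt: "(C * A ^\<^sub>m t * B) *\<^sub>v v = (C * S) *\<^sub>v (J ^\<^sub>m t *\<^sub>v ((Sinv * B) *\<^sub>v v))" if v: "v \<in> carrier_vec m" for t v
  proof -
    have Jt: "J ^\<^sub>m t \<in> carrier_mat d d" using J by simp
    have SJ: "S * J ^\<^sub>m t \<in> carrier_mat d d" using S Jt by simp
    have SJS: "S * J ^\<^sub>m t * Sinv \<in> carrier_mat d d" using SJ Si by simp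
    have "C * (S * J ^\<^sub>m t * Sinv) * B = C * ((S * J ^\<^sub>m t * Sinv) * B)"
      by (rule assoc_mult_mat[OF C SJS B])
    also have "(S * J ^\<^sub>m t * Sinv) * B = (S * J ^\<^sub>m t) * (Sinv * B)"
      by (rule assoc_mult_mat[OF SJ Si B])
    also have "\<dots> = S * (J ^\<^sub>m t * (Sinv * B))"
      by (rule assoc_mult_mat[OF S Jt SB])
    also have "C * \<dots> = (C * S) * (J ^\<^sub>m t * (Sinv * B))"
      by (rule assoc_mult_mat[symmetric, OF C S mult_carrier_mat[OF Jt SB]])
    finally have "C * A ^\<^sub>m t * B = (C * S) * (J ^\<^sub>m t * (Sinv * B))" unfolding Apow .
    then show ?thesis
      using assoc_mult_mat_vec[OF CS mult_carrier_mat[OF Jt SB] v] assoc_mult_mat_vec[OF Jt SB v] by simp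
  qed
  have eqM: "markov_mat (n + 1) A B C D *\<^sub>v x = D *\<^sub>v xb 0 + (C * S) *\<^sub>v w"
  proof (rule eq_vecI)
    fix i assume "i < dim_vec (D *\<^sub>v xb 0 + (C * S) *\<^sub>v w)"
    then have i: "i < p" using dD C by simp
    have blk: "markov_mat (n+1) A B C D $$ (i, b*m+l) = (if b = 0 then D $$ (i,l) else (C * A ^\<^sub>m (b - 1) * B) $$ (i,l))"
      if "b < n+1" "l < m" for b l
    proof -
      have "b * m + l < (n+1) * m"
      proof -
        have "b * m + l < b * m + m" using that by simp
        also have "\<dots> = (b+1) * m" by simp
        also have "\<dots> \<le> (n+1) * m" using that by (intro mult_right_mono) auto
        finally show ?thesis .
      qed
      moreover have "(b*m+l) div m = b" "(b*m+l) mod m = l" using that by auto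
      ultimately show ?thesis using i dD by (simp add: markov_index)
    qed
    have "(markov_mat (n + 1) A B C D *\<^sub>v x) $ i = (\<Sum>c<(n+1)*m. markov_mat (n+1) A B C D $$ (i,c) * x $ c)"
      by (subst mult_mat_vec_index) (use i dD dx in auto)
    also have "\<dots> = (\<Sum>b<n+1. \<Sum>l<m. markov_mat (n+1) A B C D $$ (i,b*m+l) * x $ (b*m+l))" by (rule sum_blocks)
    also have "\<dots> = (\<Sum>b<n+1. \<Sum>l<m. (if b = 0 then D $$ (i,l) else (C * A ^\<^sub>m (b - 1) * B) $$ (i,l)) * xb b $ l)"
    proof (intro sum.cong refl)
      fix b l assume bl: "b \<in> {..<n+1}" "l \<in> {..<m}"
      then show "markov_mat (n+1) A B C D $$ (i,b*m+l) * x $ (b*m+l) = (if b = 0 then D $$ (i,l) else (C * A ^\<^sub>m (b - 1) * B) $$ (i,l)) * xb b $ l"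
        using blk[of b l] by (simp add: xb_def)
    qed
    also have "\<dots> = (\<Sum>l<m. D $$ (i,l) * xb 0 $ l) + (\<Sum>t<n. \<Sum>l<m. (C * A ^\<^sub>m t * B) $$ (i,l) * xb (Suc t) $ l)"
      unfolding Suc_eq_plus1[symmetric] sum.lessThan_Suc_shift by simp
    also have "(\<Sum>l<m. D $$ (i,l) * xb 0 $ l) = (D *\<^sub>v xb 0) $ i"
      by (subst mult_mat_vec_index) (use i dD xbc in auto)
    also have "(\<Sum>t<n. \<Sum>l<m. (C * A ^\<^sub>m t * B) $$ (i,l) * xb (Suc t) $ l)
       = (\<Sum>t<n. \<Sum>j<d. (C * S) $$ (i,j) * (\<Sum>l<d. (J ^\<^sub>m t) $$ (j,l) * y t $ l))"
    proof (rule sum.cong[OF refl])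
      fix t
      have "(\<Sum>l<m. (C * A ^\<^sub>m t * B) $$ (i,l) * xb (Suc t) $ l) = ((C * A ^\<^sub>m t * B) *\<^sub>v xb (Suc t)) $ i"
        by (subst mult_mat_vec_index) (use i C B xbc in auto)
      also have "\<dots> = ((C * S) *\<^sub>v (J ^\<^sub>m t *\<^sub>v y t)) $ i" unfolding y_def by (simp add: Mt[OF xbc])
      also have "\<dots> = (\<Sum>j<d. (C * S) $$ (i,j) * (J ^\<^sub>m t *\<^sub>v y t) $ j)"
        by (subst mult_mat_vec_index) (use i CS J yc in auto)
      also have "\<dots> = (\<Sum>j<d. (C * S) $$ (i,j) * (\<Sum>l<d. (J ^\<^sub>m t) $$ (j,l) * y t $ l))"
        by (intro sum.cong refl, subst mult_mat_vec_index) (use J yc in auto)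
      finally show "(\<Sum>l<m. (C * A ^\<^sub>m t * B) $$ (i,l) * xb (Suc t) $ l)
       = (\<Sum>j<d. (C * S) $$ (i,j) * (\<Sum>l<d. (J ^\<^sub>m t) $$ (j,l) * y t $ l))" .
    qed
    also have "\<dots> = (\<Sum>j<d. \<Sum>t<n. (C * S) $$ (i,j) * (\<Sum>l<d. (J ^\<^sub>m t) $$ (j,l) * y t $ l))"
      by (rule sum.swap)
    also have "\<dots> = (\<Sum>j<d. (C * S) $$ (i,j) * w $ j)"
      unfolding w_def by (intro sum.cong refl) (simp add: sum_distrib_left)
    also have "\<dots> = ((C * S) *\<^sub>v w) $ i"
      by (subst mult_mat_vec_index) (use i CS in \<open>auto simp: w_def\<close>)
    finally show "(markov_mat (n + 1) A B C D *\<^sub>v x) $ i = (D *\<^sub>v xb 0 + (C * S) *\<^sub>v w) $ i"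
      using i dD CS C by simp
  qed (use dD CS C in simp)
  have ny: "vec_norm2 (y t) \<le> op_norm (Sinv * B) * vec_norm2 (xb (Suc t))" for t
    unfolding y_def by (rule op_norm_bound) (use SB xbc in auto)
  have "vec_norm2 w = L2_set (\<lambda>j. cmod (\<Sum>t<n. \<Sum>l<d. (J ^\<^sub>m t) $$ (j,l) * y t $ l)) {..<d}"
    unfolding vec_norm2_L2 w_def by (intro L2_set_cong) auto
  also have "\<dots> \<le> K * sqrt (\<Sum>t<n. (L2_set (\<lambda>l. cmod (y t $ l)) {..<d})^2)"
    using Jineq unfolding blk_ineq_def by (rule allE[of _ "\<lambda>t l. y t $ l"])
  also have "(\<Sum>t<n. (L2_set (\<lambda>l. cmod (y t $ l)) {..<d})^2) = (\<Sum>t<n. (vec_norm2 (y t))^2)"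
    unfolding vec_norm2_L2 dy by simp
  also have "\<dots> \<le> (\<Sum>t<n. (op_norm (Sinv * B))^2 * (vec_norm2 (xb (Suc t)))^2)"
    by (intro sum_mono) (metis ny power_mono power_mult_distrib vec_norm2_nonneg)
  also have "\<dots> = (op_norm (Sinv * B))^2 * (\<Sum>t<n. (vec_norm2 (xb (Suc t)))^2)"
    by (simp add: sum_distrib_left)
  also have "\<dots> \<le> (op_norm (Sinv * B))^2"
    using xbs by (simp add: mult_left_le)
  finally have nw: "vec_norm2 w \<le> K * op_norm (Sinv * B)"
    using K0 op_norm_nonneg[of "Sinv * B"] by (smt (verit) mult_left_mono real_sqrt_abs real_sqrt_le_mono)
  have "vec_norm2 (markov_mat (n + 1) A B C D *\<^sub>v x) \<le> vec_norm2 (D *\<^sub>v xb 0) + vec_norm2 ((C * S) *\<^sub>v w)"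
    unfolding eqM by (rule vec_norm2_add) (use dD CS C in simp)
  also have "vec_norm2 (D *\<^sub>v xb 0) \<le> op_norm D"
  proof -
    have "vec_norm2 (D *\<^sub>v xb 0) \<le> op_norm D * vec_norm2 (xb 0)"
      by (rule op_norm_bound) (use dD xbc in auto)
    also have "\<dots> \<le> op_norm D" using xb0 op_norm_nonneg by (simp add: mult_left_le)
    finally show ?thesis .
  qed
  also have "vec_norm2 ((C * S) *\<^sub>v w) \<le> op_norm (C * S) * vec_norm2 w"
    by (rule op_norm_bound) (use CS in \<open>auto simp: w_def\<close>)
  also have "\<dots> \<le> op_norm (C * S) * (K * op_norm (Sinv * B))"
    by (rule mult_left_mono[OF nw op_norm_nonneg])
  finally show "vec_norm2 (markov_mat (n + 1) A B C D *\<^sub>v x) \<le> op_norm D + op_norm (Sinv * B) * op_norm (C * S) * K2 n_as n"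
    unfolding K_def by (simp add: algebra_simps)
qed

theorem proposition16:
  fixes A B C D S Sinv :: "complex mat" and n_as :: "(nat \<times> complex) list"
    and d m p n :: nat
  assumes "d > 0"
    and "A \<in> carrier_mat d d" and "B \<in> carrier_mat d m"
    and "C \<in> carrier_mat p d" and "D \<in> carrier_mat p m"
    and "similar_mat_wit A (jordan_matrix n_as) S Sinv"
    and "spectral_radius A \<le> 1"
    and "n \<ge> 1"
  shows "op_norm (markov_mat n A B C D) \<le> op_norm (markov_mat (n + 1) A B C D)
       \<and> op_norm (markov_mat (n + 1) A B C D)
           \<le> op_norm D + op_norm (Sinv * B) * op_norm (C * S) * K2 n_as n"
  using markov_mono[of n A B C D] markov_bound[OF assms] by blast

end
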